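(* Let $G=(\mathcal{S},\mathbb{A})$ be a finite directed acyclic graph with a unique initial state $s_0\in\mathcal{S}$ having no incoming edges, such that every state is reachable from $s_0$. Let $\mathcal{X}\subset\mathcal{S}$ be the set of terminal states (states with no outgoing edges), and assume $\mathcal{X}\neq\emptyset$. Let $\mathcal{E}:\mathcal{S}\to\mathbb{R}$ be an energy function defined on all states, and for an edge $(s\to s')\in\mathbb{A}$ put $\mathcal{E}(s\to s')=\mathcal{E}(s')-\mathcal{E}(s)$. The reward of a terminal state $x$ is $R(x)=e^{-\mathcal{E}(x)}$. Let $P_F$ be a forward policy, i.e. for each nonterminal $s$ a probability distribution $P_F(\cdot\mid s)$ on the children of $s$; let $P_B$ be a backward policy, i.e. for each $s'\neq s_0$ a probability distribution $P_B(\cdot\mid s')$ on the parents of $s'$; and let $\widetilde F:\mathcal{S}\to(0,\infty)$ (the forward-looking flow) satisfy $\widetilde F(x)=1$ for every $x\in\mathcal{X}$. Suppose that for every edge $(s\to s')\in\mathbb{A}$ the FL-DB loss $$\mathcal{L}(s,s')=\Big(\log\widetilde F(s)+\log P_F(s'\mid s)-\log\widetilde F(s')-\log P_B(s\mid s')+\mathcal{E}(s\to s')\Big)^2$$ vanishes, i.e. $\widetilde F(s)P_F(s'\mid s)=\widetilde F(s')P_B(s\mid s')e^{-\mathcal{E}(s\to s')}$. Then $P_F$ samples terminal states proportionally to the reward: for every $x\in\mathcal{X}$, $$P_F^\top(x)=\frac{e^{-\mathcal{E}(x)}}{\sum_{y\in\mathcal{X}}e^{-\mathcal{E}(y)}},$$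 where $P_F^\top(x)=\sum_{\tau=(s_0\to s_1\to\cdots\to s_n=x)}\prod_{i=1}^n P_F(s_i\mid s_{i-1})$ is the probability that a trajectory started at $s_0$ and following $P_F$ until reaching a terminal state ends at $x$ (the sum is over all complete trajectories, i.e. directed paths in $G$ from $s_0$ to $x$).
   Context: This is the correctness statement for "forward-looking GFlowNets". The forward-looking flow $\widetilde F$ is intended to represent $e^{\mathcal{E}(s)}F(s)$, where $F$ is an ordinary GFlowNet state flow; at terminal states the ordinary flow equals the reward $e^{-\mathcal{E}(x)}$, which corresponds to the normalization $\widetilde F(x)=1$ for $x\in\mathcal{X}$. *)

theory Defs
  imports Complex_Main
begin

definition is_path :: "('a \<times> 'a) set \<Rightarrow> 'a list \<Rightarrow> bool" where
  "is_path E xs \<longleftrightarrow> xs \<noteq> [] \<and> (\<forall>i < length xs - 1. (xs ! i, xs ! Suc i) \<in> E)"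

definition trajectories :: "('a \<times> 'a) set \<Rightarrow> 'a \<Rightarrow> 'a \<Rightarrow> 'a list set" where
  "trajectories E s0 x = {xs. is_path E xs \<and> hd xs = s0 \<and> last xs = x}"

text \<open>Probability of a trajectory under PF, where PF s s' = P_F(s' | s).\<close>
definition path_prob :: "('a \<Rightarrow> 'a \<Rightarrow> real) \<Rightarrow> 'a list \<Rightarrow> real" where
  "path_prob PF xs = (\<Prod>i < length xs - 1. PF (xs ! i) (xs ! Suc i))"

definition term_prob :: "('a \<times> 'a) set \<Rightarrow> 'a \<Rightarrow> ('a \<Rightarrow> 'a \<Rightarrow> real) \<Rightarrow> 'a \<Rightarrow> real" where
  "term_prob E s0 PF x = (\<Sum>xs \<in> trajectories E s0 x. path_prob PF xs)"

definition terminal_states :: "'a set \<Rightarrow> ('a \<times> 'a) set \<Rightarrow> 'a set" where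
  "terminal_states S E = {s \<in> S. \<not> (\<exists>s'. (s, s') \<in> E)}"

end

theory Submission
  imports Defs
begin



lemma is_path_snoc:
  assumes "xs \<noteq> []"
  shows "is_path E (xs @ [y]) \<longleftrightarrow> is_path E xs \<and> (last xs, y) \<in> E"
proof -
  have A: "(\<forall>i < length xs. ((xs@[y]) ! i, (xs@[y]) ! Suc i) \<in> E) \<longleftrightarrow>
        (\<forall>i < length xs - 1. (xs ! i, xs ! Suc i) \<in> E) \<and> (last xs, y) \<in> E"
  proof
    assume H: "\<forall>i < length xs. ((xs@[y]) ! i, (xs@[y]) ! Suc i) \<in> E"
    have 1: "\<forall>i < length xs - 1. (xs ! i, xs ! Suc i) \<in> E"
    proof (intro allI impI)
      fix i assume "i < length xs - 1"
      hence "i < length xs" "Suc i < length xs" by auto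
      with H[rule_format, of i] show "(xs ! i, xs ! Suc i) \<in> E" by (simp add: nth_append)
    qed
    have "((xs@[y]) ! (length xs - 1), (xs@[y]) ! Suc (length xs - 1)) \<in> E"
      using H assms by (metis One_nat_def Suc_pred length_greater_0_conv lessI)
    hence "(last xs, y) \<in> E" using assms by (simp add: nth_append last_conv_nth)
    with 1 show "(\<forall>i < length xs - 1. (xs ! i, xs ! Suc i) \<in> E) \<and> (last xs, y) \<in> E" by simp
  next
    assume H: "(\<forall>i < length xs - 1. (xs ! i, xs ! Suc i) \<in> E) \<and> (last xs, y) \<in> E"
    show "\<forall>i < length xs. ((xs@[y]) ! i, (xs@[y]) ! Suc i) \<in> E"
    proof (intro allI impI)
      fix i assume i: "i < length xs"
      show "((xs@[y]) ! i, (xs@[y]) ! Suc i) \<in> E"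
      proof (cases "i = length xs - 1")
        case True thus ?thesis using H assms i by (simp add: nth_append last_conv_nth)
      next
        case False
        hence "Suc i < length xs" "i < length xs - 1" using i by auto
        thus ?thesis using H i by (simp add: nth_append)
      qed
    qed
  qed
  show ?thesis using A assms unfolding is_path_def by simp
qed

lemma path_prob_snoc:
  assumes "xs \<noteq> []"
  shows "path_prob PF (xs @ [y]) = path_prob PF xs * PF (last xs) y"
proof -
  obtain n where n: "length xs = Suc n" using assms by (cases xs) auto
  have "path_prob PF (xs @ [y]) = (\<Prod>i < Suc n. PF ((xs@[y]) ! i) ((xs@[y]) ! Suc i))"
    unfolding path_prob_def using n by simp
  also have "\<dots> = (\<Prod>i < n. PF (xs ! i) (xs ! Suc i)) * PF (last xs) y"
    using n by (simp add: nth_append last_conv_nth prod.lessThan_Suc)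
      (metis diff_Suc_1 last_conv_nth list.size(3) nat.distinct(1))
  also have "\<dots> = path_prob PF xs * PF (last xs) y"
    unfolding path_prob_def using n by simp
  finally show ?thesis .
qed


theorem proposition4p2:
  fixes S :: "'a set" and E :: "('a \<times> 'a) set" and s0 :: 'a
    and En :: "'a \<Rightarrow> real"
    and PF :: "'a \<Rightarrow> 'a \<Rightarrow> real"   \<comment> \<open>PF s s' = P_F(s' | s)\<close>
    and PB :: "'a \<Rightarrow> 'a \<Rightarrow> real"   \<comment> \<open>PB s' s = P_B(s | s')\<close>
    and Ft :: "'a \<Rightarrow> real"
  assumes finS: "finite S"
    and E_sub: "E \<subseteq> S \<times> S"
    and acyc: "acyclic E"
    and s0_in: "s0 \<in> S"
    and s0_init: "\<forall>s. (s, s0) \<notin> E"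
    and reach: "\<forall>s \<in> S. (s0, s) \<in> E\<^sup>*"
    and X_ne: "terminal_states S E \<noteq> {}"
    and PF_nonneg: "\<forall>s s'. (s, s') \<in> E \<longrightarrow> PF s s' \<ge> 0"
    and PF_sum: "\<forall>s \<in> S - terminal_states S E. (\<Sum>s' \<in> {s'. (s, s') \<in> E}. PF s s') = 1"
    and PB_nonneg: "\<forall>s s'. (s, s') \<in> E \<longrightarrow> PB s' s \<ge> 0"
    and PB_sum: "\<forall>s' \<in> S - {s0}. (\<Sum>s \<in> {s. (s, s') \<in> E}. PB s' s) = 1"
    and Ft_pos: "\<forall>s \<in> S. Ft s > 0"
    and Ft_term: "\<forall>x \<in> terminal_states S E. Ft x = 1"
    and FLDB: "\<forall>(s, s') \<in> E. Ft s * PF s s' = Ft s' * PB s' s * exp (- (En s' - En s))"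
  shows "\<forall>x \<in> terminal_states S E.
           term_prob E s0 PF x = exp (- En x) / (\<Sum>y \<in> terminal_states S E. exp (- En y))"

proof -
  define F where "F s = Ft s * exp (- En s)" for s
  define T where "T = terminal_states S E"
  have Fpos: "\<forall>s\<in>S. F s > 0" using Ft_pos by (simp add: F_def)
  have wfE: "wf E"
  proof -
    have "finite E" using finite_subset[OF E_sub] finS by blast
    thus ?thesis using acyc finite_acyclic_wf by blast
  qed
  have DB: "F p * PF p s = F s * PB s p" if "(p, s) \<in> E" for p s
  proof -
    have "Ft p * PF p s = Ft s * PB s p * exp (- (En s - En p))" using FLDB that by blast
    hence "Ft p * PF p s * exp (- En p) = Ft s * PB s p * (exp (- (En s - En p)) * exp (- En p))"
      by simp
    also have "exp (- (En s - En p)) * exp (- En p) = exp (- En s)" by (simp add: exp_add[symmetric])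
    finally show ?thesis by (simp add: F_def algebra_simps)
  qed
  have finPar: "finite {p. (p, s) \<in> E}" for s
    using finite_subset[of "{p. (p, s) \<in> E}" S] E_sub finS by blast
  have finCh: "finite {s. (p, s) \<in> E}" for p
    using finite_subset[of "{s. (p, s) \<in> E}" S] E_sub finS by blast
  have traj0: "trajectories E s0 s0 = {[s0]}"
  proof
    show "{[s0]} \<subseteq> trajectories E s0 s0" by (simp add: trajectories_def is_path_def)
  next
    show "trajectories E s0 s0 \<subseteq> {[s0]}"
    proof
      fix xs assume "xs \<in> trajectories E s0 s0"
      hence P: "is_path E xs" "hd xs = s0" "last xs = s0" by (auto simp: trajectories_def)
      have ne: "xs \<noteq> []" using P(1) by (simp add: is_path_def)
      show "xs \<in> {[s0]}"
      proof (cases "butlast xs = []")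
        case True
        hence "xs = [last xs]" using ne by (metis append_butlast_last_id append_Nil)
        thus ?thesis using P by simp
      next
        case False
        have "xs = butlast xs @ [s0]" using ne P(3) by (metis append_butlast_last_id)
        hence "(last (butlast xs), s0) \<in> E" using is_path_snoc[OF False, of E s0] P(1) by simp
        thus ?thesis using s0_init by blast
      qed
    qed
  qed
  have trajS: "trajectories E s0 s = (\<lambda>xs. xs @ [s]) ` (\<Union>p\<in>{p. (p, s) \<in> E}. trajectories E s0 p)"
    if "s \<noteq> s0" for s
  proof
    show "trajectories E s0 s \<subseteq> (\<lambda>xs. xs @ [s]) ` (\<Union>p\<in>{p. (p, s) \<in> E}. trajectories E s0 p)"
    proof
      fix xs assume "xs \<in> trajectories E s0 s"
      hence P: "is_path E xs" "hd xs = s0" "last xs = s" by (auto simp: trajectories_def)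
      have ne: "xs \<noteq> []" using P(1) by (simp add: is_path_def)
      have bne: "butlast xs \<noteq> []"
      proof
        assume "butlast xs = []"
        hence "xs = [last xs]" using ne by (metis append_butlast_last_id append_Nil)
        thus False using P that by (metis list.sel(1))
      qed
      have xs: "xs = butlast xs @ [s]" using ne P(3) by (metis append_butlast_last_id)
      hence Q: "is_path E (butlast xs)" "(last (butlast xs), s) \<in> E"
        using is_path_snoc[OF bne, of E s] P(1) by simp_all
      have "hd (butlast xs) = s0" using P(2) bne xs by (metis hd_append2)
      hence "butlast xs \<in> trajectories E s0 (last (butlast xs))"
        using Q by (simp add: trajectories_def)
      thus "xs \<in> (\<lambda>xs. xs @ [s]) ` (\<Union>p\<in>{p. (p, s) \<in> E}. trajectories E s0 p)"
        using Q(2) xs by blast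
    qed
  next
    show "(\<lambda>xs. xs @ [s]) ` (\<Union>p\<in>{p. (p, s) \<in> E}. trajectories E s0 p) \<subseteq> trajectories E s0 s"
    proof
      fix ys assume "ys \<in> (\<lambda>xs. xs @ [s]) ` (\<Union>p\<in>{p. (p, s) \<in> E}. trajectories E s0 p)"
      then obtain xs p where ys: "ys = xs @ [s]" and pE: "(p, s) \<in> E"
        and xs: "xs \<in> trajectories E s0 p" by blast
      have P: "is_path E xs" "hd xs = s0" "last xs = p" using xs by (auto simp: trajectories_def)
      have ne: "xs \<noteq> []" using P(1) by (simp add: is_path_def)
      show "ys \<in> trajectories E s0 s"
        using is_path_snoc[OF ne, of E s] P pE ne ys by (simp add: trajectories_def)
    qed
  qed
  have main: "s \<in> S \<longrightarrow> finite (trajectories E s0 s) \<and> term_prob E s0 PF s = F s / F s0" for s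
    using wfE
  proof (induction s rule: wf_induct_rule)
    case (less s)
    show ?case
    proof
      assume sS: "s \<in> S"
      show "finite (trajectories E s0 s) \<and> term_prob E s0 PF s = F s / F s0"
      proof (cases "s = s0")
        case True
        have "F s0 > 0" using Fpos s0_in by blast
        thus ?thesis using traj0 True
          by (simp add: term_prob_def path_prob_def)
      next
        case False
        let ?Par = "{p. (p, s) \<in> E}"
        have IH: "finite (trajectories E s0 p) \<and> term_prob E s0 PF p = F p / F s0"
          if "p \<in> ?Par" for p using less that E_sub by blast
        have inj: "inj_on (\<lambda>xs. xs @ [s]) A" for A by (rule inj_onI) simp
        have finU: "finite (\<Union>p\<in>?Par. trajectories E s0 p)" using IH finPar by blast
        have "term_prob E s0 PF s = (\<Sum>xs\<in>(\<Union>p\<in>?Par. trajectories E s0 p). path_prob PF (xs @ [s]))"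
          unfolding term_prob_def trajS[OF False] by (simp add: sum.reindex[OF inj])
        also have "\<dots> = (\<Sum>p\<in>?Par. \<Sum>xs\<in>trajectories E s0 p. path_prob PF (xs @ [s]))"
        proof (rule sum.UNION_disjoint)
          show "finite ?Par" by (rule finPar)
          show "\<forall>p\<in>?Par. finite (trajectories E s0 p)" using IH by blast
          show "\<forall>p\<in>?Par. \<forall>q\<in>?Par. p \<noteq> q \<longrightarrow> trajectories E s0 p \<inter> trajectories E s0 q = {}"
            by (auto simp: trajectories_def)
        qed
        also have "\<dots> = (\<Sum>p\<in>?Par. term_prob E s0 PF p * PF p s)"
        proof (rule sum.cong[OF refl])
          fix p assume "p \<in> ?Par"
          have "(\<Sum>xs\<in>trajectories E s0 p. path_prob PF (xs @ [s]))
              = (\<Sum>xs\<in>trajectories E s0 p. path_prob PF xs * PF p s)"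
          proof (rule sum.cong[OF refl])
            fix xs assume "xs \<in> trajectories E s0 p"
            hence "is_path E xs" "last xs = p" by (auto simp: trajectories_def)
            moreover hence "xs \<noteq> []" by (simp add: is_path_def)
            ultimately show "path_prob PF (xs @ [s]) = path_prob PF xs * PF p s"
              by (simp add: path_prob_snoc)
          qed
          thus "(\<Sum>xs\<in>trajectories E s0 p. path_prob PF (xs @ [s])) = term_prob E s0 PF p * PF p s"
            by (simp add: term_prob_def sum_distrib_right)
        qed
        also have "\<dots> = (\<Sum>p\<in>?Par. F s * PB s p / F s0)"
          using IH DB by (intro sum.cong) auto
        also have "\<dots> = F s * (\<Sum>p\<in>?Par. PB s p) / F s0"
          by (simp add: sum_distrib_left sum_divide_distrib)
        also have "\<dots> = F s / F s0" using PB_sum sS False by simp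
        finally show ?thesis using finU trajS[OF False] by simp
      qed
    qed
  qed
  \<comment> \<open>flow conservation\<close>
  define f where "f p s = F p * PF p s" for p s
  have Ch_eq: "{s. (p, s) \<in> E} = {s\<in>S. (p, s) \<in> E}" for p using E_sub by blast
  have Par_eq: "{p. (p, s) \<in> E} = {p\<in>S. (p, s) \<in> E}" for s using E_sub by blast
  have swap: "(\<Sum>p\<in>S. \<Sum>s\<in>{s. (p, s) \<in> E}. f p s) = (\<Sum>s\<in>S. \<Sum>p\<in>{p. (p, s) \<in> E}. f p s)"
  proof -
    have "(\<Sum>p\<in>S. \<Sum>s\<in>{s. (p, s) \<in> E}. f p s) = (\<Sum>p\<in>S. \<Sum>s\<in>S. if (p, s) \<in> E then f p s else 0)"
      unfolding Ch_eq using finS by (simp add: sum.inter_filter)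
    also have "\<dots> = (\<Sum>s\<in>S. \<Sum>p\<in>S. if (p, s) \<in> E then f p s else 0)" by (rule sum.swap)
    also have "\<dots> = (\<Sum>s\<in>S. \<Sum>p\<in>{p. (p, s) \<in> E}. f p s)"
      unfolding Par_eq using finS by (simp add: sum.inter_filter)
    finally show ?thesis .
  qed
  have out: "(\<Sum>s\<in>{s. (p, s) \<in> E}. f p s) = (if p \<in> T then 0 else F p)" if "p \<in> S" for p
  proof (cases "p \<in> T")
    case True
    hence "{s. (p, s) \<in> E} = {}" by (auto simp: T_def terminal_states_def)
    thus ?thesis using True by simp
  next
    case False
    have "(\<Sum>s\<in>{s. (p, s) \<in> E}. f p s) = F p * (\<Sum>s\<in>{s. (p, s) \<in> E}. PF p s)"
      by (simp add: f_def sum_distrib_left)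
    also have "\<dots> = F p" using PF_sum False that by (simp add: T_def)
    finally show ?thesis using False by simp
  qed
  have inn: "(\<Sum>p\<in>{p. (p, s) \<in> E}. f p s) = (if s = s0 then 0 else F s)" if "s \<in> S" for s
  proof (cases "s = s0")
    case True
    hence "{p. (p, s) \<in> E} = {}" using s0_init by auto
    thus ?thesis using True by simp
  next
    case False
    have "(\<Sum>p\<in>{p. (p, s) \<in> E}. f p s) = (\<Sum>p\<in>{p. (p, s) \<in> E}. F s * PB s p)"
      using DB by (intro sum.cong) (auto simp: f_def)
    also have "\<dots> = F s * (\<Sum>p\<in>{p. (p, s) \<in> E}. PB s p)" by (simp add: sum_distrib_left)
    also have "\<dots> = F s" using PB_sum False that by simp
    finally show ?thesis using False by simp
  qed
  have TS: "T \<subseteq> S" by (auto simp: T_def terminal_states_def)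
  have L: "(\<Sum>p\<in>S. \<Sum>s\<in>{s. (p, s) \<in> E}. f p s) = sum F S - sum F T"
  proof -
    have "(\<Sum>p\<in>S. \<Sum>s\<in>{s. (p, s) \<in> E}. f p s) = (\<Sum>p\<in>S. if p \<in> T then 0 else F p)"
      using out by (intro sum.cong) auto
    also have "\<dots> = sum F (S - T)"
      using finS by (simp add: sum.If_cases Diff_eq)
    also have "\<dots> = sum F S - sum F T" using finS TS by (simp add: sum_diff)
    finally show ?thesis .
  qed
  have R: "(\<Sum>s\<in>S. \<Sum>p\<in>{p. (p, s) \<in> E}. f p s) = sum F S - F s0"
  proof -
    have "(\<Sum>s\<in>S. \<Sum>p\<in>{p. (p, s) \<in> E}. f p s) = (\<Sum>s\<in>S. if s = s0 then 0 else F s)"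
      using inn by (intro sum.cong) auto
    also have "\<dots> = sum F (S - {s0})"
      using finS by (simp add: sum.If_cases Diff_eq)
    also have "\<dots> = sum F S - F s0" using finS s0_in by (simp add: sum_diff1)
    finally show ?thesis .
  qed
  have Fs0: "F s0 = (\<Sum>y\<in>T. exp (- En y))"
  proof -
    have "F s0 = sum F T" using swap L R by simp
    also have "\<dots> = (\<Sum>y\<in>T. exp (- En y))"
      using Ft_term by (intro sum.cong) (auto simp: F_def T_def)
    finally show ?thesis .
  qed
  show ?thesis
  proof
    fix x assume x: "x \<in> terminal_states S E"
    hence "x \<in> S" by (simp add: terminal_states_def)
    hence "term_prob E s0 PF x = F x / F s0" using main by blast
    also have "F x = exp (- En x)" using Ft_term x by (simp add: F_def)
    finally show "term_prob E s0 PF x = exp (- En x) / (\<Sum>y \<in> terminal_states S E. exp (- En y))"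
      using Fs0 by (simp add: T_def)
  qed
qed

end
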